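(* Let $A$ be a finite set, $\bot,\dagger\notin A$ distinct extra symbols, $N\geq1$, and let $\mathsf L$, $\pi$ and $\zeta_t$ ($t>0$) be as in the context. Then for all $x,y\in\mathsf L$, $$\zeta_t^{-1}(x,y)=\begin{cases}-\pi(y|x)^t & \text{if } y\in\mathsf L_x^{(1)},\\ 1 & \text{if } y=x,\\ 0&\text{otherwise},\end{cases}$$ where $\mathsf L_x^{(1)}=\{y\in\mathsf L: y=xa \text{ for some } a\in A\cup\{\dagger\}\}$ is the set of elements of $\mathsf L$ extending $x$ on the right by exactly one token.
   Context: $A^*$ is the set of finite strings over $A$, $|x|$ denotes length (with $\bot,\dagger$ counted). $\mathsf L=\{\bot a : a\in A^*,\ |a|\leq N-1\}\sqcup\{\bot a\dagger : a\in A^*,\ |a|<N-1\}$, partially ordered by the prefix relation ($x\leq y$ iff $y=xa'$ for some string $a'$). Strings $\bot a$ are unfinished texts. For each unfinished text $x\in\mathsf L$ with $|x|\leq N-1$ a probability mass function $p(-|x)$ on $A\cup\{\dagger\}$ is given. Define $\pi(y|x)=1$ if $x=y$; $0$ if $x\not\leq y$; and if $x=\bot a_1\cdots a_t$ is a proper prefix of $y=xa_{t+1}\cdots a_{t+k}$, $\pi(y|x)=\prod_{i=1}^k p(a_{t+i}\mid\bot a_1\cdots a_{t+i-1})$. For $t>0$, $\zeta_t$ is the $\mathsf L\times\mathsf L$ matrix $\zeta_t(x,y)=\pi(y|x)^t$ (which is invertible). *)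

theory Defs
  imports Complex_Main
begin

text \<open>Symbols: the alphabet A (a subset of type 'a) together with the two
  extra distinct symbols Bot (the start symbol) and Dag (end of text).\<close>
datatype 'a sym = Bot | Sym 'a | Dag

text \<open>Texts are lists of symbols; the length of a list counts Bot and Dag.\<close>
definition texts :: "'a set \<Rightarrow> nat \<Rightarrow> 'a sym list set" where
  "texts A N =
     {Bot # map Sym a | a. set a \<subseteq> A \<and> length a \<le> N - 1}
   \<union> {Bot # map Sym a @ [Dag] | a. set a \<subseteq> A \<and> length a < N - 1}"

definition unfinished :: "'a set \<Rightarrow> 'a sym list \<Rightarrow> bool" where
  "unfinished A x \<longleftrightarrow> (\<exists>a. set a \<subseteq> A \<and> x = Bot # map Sym a)"

definition pre :: "'a sym list \<Rightarrow> 'a sym list \<Rightarrow> bool" where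
  "pre x y \<longleftrightarrow> (\<exists>a'. y = x @ a')"

definition tokens :: "'a set \<Rightarrow> 'a sym set" where
  "tokens A = Sym ` A \<union> {Dag}"

definition cond_pmfs :: "'a set \<Rightarrow> nat \<Rightarrow> ('a sym list \<Rightarrow> 'a sym \<Rightarrow> real) \<Rightarrow> bool" where
  "cond_pmfs A N p \<longleftrightarrow>
     (\<forall>x \<in> texts A N. unfinished A x \<and> length x \<le> N - 1 \<longrightarrow>
        (\<forall>s \<in> tokens A. p x s \<ge> 0) \<and> (\<Sum>s \<in> tokens A. p x s) = 1)"

text \<open>pi(y|x): with list indexing y!0 = Bot, y!j = a_j, the factor
  p(a_j | Bot a_1 ... a_{j-1}) is p (take j y) (y ! j).\<close>
definition cpi :: "('a sym list \<Rightarrow> 'a sym \<Rightarrow> real) \<Rightarrow> 'a sym list \<Rightarrow> 'a sym list \<Rightarrow> real" where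
  "cpi p y x =
     (if x = y then 1
      else if \<not> pre x y then 0
      else (\<Prod>j \<in> {length x..<length y}. p (take j y) (y ! j)))"

definition zeta :: "('a sym list \<Rightarrow> 'a sym \<Rightarrow> real) \<Rightarrow> real \<Rightarrow> 'a sym list \<Rightarrow> 'a sym list \<Rightarrow> real" where
  "zeta p t x y = (cpi p y x) powr t"

definition is_inverse_on :: "'i set \<Rightarrow> ('i \<Rightarrow> 'i \<Rightarrow> real) \<Rightarrow> ('i \<Rightarrow> 'i \<Rightarrow> real) \<Rightarrow> bool" where
  "is_inverse_on I M M' \<longleftrightarrow>
     (\<forall>x\<in>I. \<forall>y\<in>I. (\<Sum>z\<in>I. M x z * M' z y) = (if x = y then 1 else 0)) \<and>
     (\<forall>x\<in>I. \<forall>y\<in>I. (\<Sum>z\<in>I. M' x z * M z y) = (if x = y then 1 else 0))"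

definition one_step :: "'a set \<Rightarrow> nat \<Rightarrow> 'a sym list \<Rightarrow> 'a sym list set" where
  "one_step A N x = {y \<in> texts A N. \<exists>s \<in> tokens A. y = x @ [s]}"

end

theory Submission
  imports Defs
begin

lemma texts_cases:
  assumes "y \<in> texts A N"
  obtains a e where "set a \<subseteq> A" "y = Bot # map Sym a @ e"
    "(e = [] \<and> length a \<le> N - 1) \<or> (e = [Dag] \<and> length a < N - 1)"
  using assms unfolding texts_def by fastforce

lemma texts_len: "y \<in> texts A N \<Longrightarrow> N \<ge> 1 \<Longrightarrow> 1 \<le> length y \<and> length y \<le> N"
  by (erule texts_cases) auto

lemma texts_finite:
  assumes "finite A"
  shows "finite (texts A N)"
proof -
  have "texts A N \<subseteq> {xs. set xs \<subseteq> insert Bot (insert Dag (Sym ` A)) \<and> length xs \<le> N + 1}"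
    by (auto simp: texts_def) blast+
  moreover have "finite {xs. set xs \<subseteq> insert Bot (insert Dag (Sym ` A)) \<and> length xs \<le> N + 1}"
    using assms by (intro finite_lists_length_le) auto
  ultimately show ?thesis by (rule finite_subset)
qed

lemma texts_take:
  assumes "y \<in> texts A N" "1 \<le> k" "k \<le> length y"
  shows "take k y \<in> texts A N"
  using assms(1)
proof (rule texts_cases)
  fix a e assume a: "set a \<subseteq> A" "y = Bot # map Sym a @ e"
    "(e = [] \<and> length a \<le> N - 1) \<or> (e = [Dag] \<and> length a < N - 1)"
  show ?thesis
  proof (cases "k = length y")
    case True then show ?thesis using assms by simp
  next
    case False
    then have "take k y = Bot # map Sym (take (k - 1) a)"
      using a assms by (cases k) (auto simp: take_append take_map)
    moreover have "set (take (k - 1) a) \<subseteq> A" using a(1) by (meson order_trans set_take_subset)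
    ultimately show ?thesis using a(3) unfolding texts_def by fastforce
  qed
qed

lemma texts_take_unf:
  assumes "y \<in> texts A N" "1 \<le> k" "k < length y"
  shows "unfinished A (take k y)"
  using assms(1)
proof (rule texts_cases)
  fix a e assume a: "set a \<subseteq> A" "y = Bot # map Sym a @ e"
    "(e = [] \<and> length a \<le> N - 1) \<or> (e = [Dag] \<and> length a < N - 1)"
  have "take k y = Bot # map Sym (take (k - 1) a)"
    using a assms by (cases k) (auto simp: take_append take_map)
  moreover have "set (take (k - 1) a) \<subseteq> A" using a(1) by (meson order_trans set_take_subset)
  ultimately show ?thesis unfolding unfinished_def by blast
qed

lemma texts_nth:
  assumes "y \<in> texts A N" "1 \<le> j" "j < length y"
  shows "y ! j \<in> tokens A"
  using assms(1)
proof (rule texts_cases)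
  fix a e assume a: "set a \<subseteq> A" "y = Bot # map Sym a @ e"
    "(e = [] \<and> length a \<le> N - 1) \<or> (e = [Dag] \<and> length a < N - 1)"
  obtain i where i: "j = Suc i" using assms(2) by (cases j) auto
  show ?thesis using a assms i by (auto simp: nth_append tokens_def intro!: imageI dest: nth_mem)
qed

lemma cpi_nonneg:
  assumes "cond_pmfs A N p" "N \<ge> 1" "x \<in> texts A N" "y \<in> texts A N"
  shows "cpi p y x \<ge> 0"
proof -
  have "p (take j y) (y ! j) \<ge> 0" if "j \<in> {length x..<length y}" for j
  proof -
    have j: "1 \<le> j" "j < length y" using that texts_len[OF assms(3,2)] by auto
    have "take j y \<in> texts A N" using texts_take[OF assms(4) j(1)] j by simp
    moreover have "unfinished A (take j y)" by (rule texts_take_unf[OF assms(4) j])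
    moreover have "length (take j y) \<le> N - 1" using j texts_len[OF assms(4,2)] by simp
    moreover have "y ! j \<in> tokens A" by (rule texts_nth[OF assms(4) j])
    ultimately show ?thesis using assms(1) unfolding cond_pmfs_def by blast
  qed
  then show ?thesis unfolding cpi_def by (auto intro: prod_nonneg)
qed

lemma cpi_mult:
  assumes "pre x w" "pre w y"
  shows "cpi p y x = cpi p w x * cpi p y w"
proof -
  obtain u where u: "w = x @ u" using assms(1) pre_def by blast
  obtain v where v: "y = w @ v" using assms(2) pre_def by blast
  show ?thesis
  proof (cases "x = w \<or> w = y")
    case True then show ?thesis by (auto simp: cpi_def)
  next
    case False
    then have xy: "x \<noteq> y" using u v by auto
    have pxy: "pre x y" using u v pre_def by auto
    have "cpi p y x = (\<Prod>j \<in> {length x..<length y}. p (take j y) (y ! j))"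
      using xy pxy by (simp add: cpi_def)
    also have "\<dots> = (\<Prod>j \<in> {length x..<length w}. p (take j y) (y ! j)) *
        (\<Prod>j \<in> {length w..<length y}. p (take j y) (y ! j))"
      using u v by (intro prod.atLeastLessThan_concat[symmetric]) auto
    also have "(\<Prod>j \<in> {length x..<length w}. p (take j y) (y ! j)) =
        (\<Prod>j \<in> {length x..<length w}. p (take j w) (w ! j))"
      using v by (intro prod.cong) (auto simp: nth_append)
    finally show ?thesis using False assms by (simp add: cpi_def)
  qed
qed


lemma pre_refl: "pre x x" by (simp add: pre_def)

lemma one_step_not_self: "x \<notin> one_step A N x"
  by (auto simp: one_step_def)

lemma cpi_short: "length y < length x \<Longrightarrow> cpi p y x = 0"
  by (auto simp: cpi_def pre_def)

theorem corollary3p8: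
  fixes A :: "'a set" and N :: nat and p :: "'a sym list \<Rightarrow> 'a sym \<Rightarrow> real" and t :: real
  assumes "finite A" and "N \<ge> 1" and "cond_pmfs A N p" and "t > 0"
  shows "is_inverse_on (texts A N) (zeta p t)
           (\<lambda>x y. if y \<in> one_step A N x then - ((cpi p y x) powr t)
                  else if y = x then 1 else 0)"
proof -
  let ?I = "texts A N"
  let ?M = "\<lambda>x y. if y \<in> one_step A N x then - ((cpi p y x) powr t)
                  else if y = x then 1 else 0"
  have fin: "finite ?I" using assms(1) by (rule texts_finite)
  have nn: "\<And>x y. x \<in> ?I \<Longrightarrow> y \<in> ?I \<Longrightarrow> cpi p y x \<ge> 0"
    using cpi_nonneg[OF assms(3,2)] by blast
  have chain: "zeta p t x w * cpi p y w powr t = cpi p y x powr t"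
    if "x \<in> ?I" "w \<in> ?I" "y \<in> ?I" "pre x w" "pre w y" for x w y
    using that nn cpi_mult[OF that(4,5), of p] by (simp add: zeta_def powr_mult)
  have zeta_self: "zeta p t x x = 1" for x by (simp add: zeta_def cpi_def)
  have L: "(\<Sum>z\<in>?I. zeta p t x z * ?M z y) = (if x = y then 1 else 0)"
    if x: "x \<in> ?I" and y: "y \<in> ?I" for x y
  proof -
    let ?w = "butlast y"
    let ?g = "\<lambda>z. zeta p t x z * cpi p y z powr t"
    have pw: "zeta p t x z * ?M z y = (if z = y then zeta p t x z else 0) -
        (if z = ?w then (if y \<in> one_step A N z then ?g z else 0) else 0)" for z
      using one_step_not_self[of y A N] by (auto simp: one_step_def)
    have "(\<Sum>z\<in>?I. zeta p t x z * ?M z y) = zeta p t x y -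
        (if ?w \<in> ?I then (if y \<in> one_step A N ?w then ?g ?w else 0) else 0)"
      unfolding pw sum_subtractf using fin y by (simp add: sum.delta)
    also have "\<dots> = (if x = y then 1 else 0)"
    proof (cases "x = y")
      case True
      have "length ?w < length x" using True texts_len[OF x assms(2)] by auto
      then show ?thesis using True using zeta_self[of y] by (simp add: zeta_def cpi_short)
    next
      case False
      show ?thesis
      proof (cases "?w \<in> ?I \<and> y \<in> one_step A N ?w")
        case True
        then have yw: "y = ?w @ [last y]" "?w \<in> ?I" by (auto simp: one_step_def) (metis last_snoc)
        show ?thesis
        proof (cases "pre x ?w")
          case True
          have "pre ?w y" using yw pre_def by metis
          then show ?thesis using chain[OF x yw(2) y True] False \<open>?w \<in> ?I \<and> _\<close> by (simp add: zeta_def)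
        next
          case nw: False
          then have "x \<noteq> ?w" using pre_refl by metis
          then have "zeta p t x ?w = 0" using nw by (simp add: zeta_def cpi_def)
          moreover have "\<not> pre x y"
          proof
            assume "pre x y"
            then obtain a where a: "y = x @ a" by (auto simp: pre_def)
            then have "a \<noteq> []" using False by auto
            then have "?w = x @ butlast a" using a by (simp add: butlast_append)
            then show False using nw by (simp add: pre_def)
          qed
          ultimately show ?thesis using False True by (simp add: zeta_def cpi_def)
        qed
      next
        case nc: False
        have "\<not> pre x y"
        proof
          assume "pre x y"
          then obtain a where a: "y = x @ a" by (auto simp: pre_def)
          then have an: "a \<noteq> []" using False by auto
          have lx: "1 \<le> length x" using texts_len[OF x assms(2)] by simp
          have ly: "length y = length x + length a" using a by simp
          have la: "length a \<ge> 1" using an by (cases a) auto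
          have wI: "?w \<in> ?I" using texts_take[OF y, of "length y - 1"] lx ly la
            by (simp add: butlast_conv_take)
          have "last y = y ! (length y - 1)" using an a by (simp add: last_conv_nth)
          moreover have "y ! (length y - 1) \<in> tokens A"
            using texts_nth[OF y, of "length y - 1"] lx ly la by simp
          moreover have "y = ?w @ [last y]" using an a by (metis append_is_Nil_conv append_butlast_last_id)
          ultimately have "y \<in> one_step A N ?w" using y by (auto simp: one_step_def)
          then show False using nc wI by simp
        qed
        then show ?thesis using False nc by (simp add: zeta_def cpi_def)
      qed
    qed
    finally show ?thesis .
  qed
  have R: "(\<Sum>z\<in>?I. ?M x z * zeta p t z y) = (if x = y then 1 else 0)"
    if x: "x \<in> ?I" and y: "y \<in> ?I" for x y
  proof -
    let ?h = "\<lambda>z. cpi p z x powr t * zeta p t z y"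
    have sub: "one_step A N x \<subseteq> ?I" by (auto simp: one_step_def)
    have pw: "?M x z * zeta p t z y = (if z = x then zeta p t x y else 0) -
        (if z \<in> one_step A N x then ?h z else 0)" for z
      using one_step_not_self[of x A N] by auto
    have "(\<Sum>z\<in>?I. ?M x z * zeta p t z y) = zeta p t x y - (\<Sum>z\<in>one_step A N x. ?h z)"
      unfolding pw sum_subtractf using fin x sub
      by (simp add: sum.delta sum.inter_restrict[symmetric] Int_absorb1)
    also have "\<dots> = (if x = y then 1 else 0)"
    proof (cases "x = y")
      case True
      have "?h z = 0" if "z \<in> one_step A N x" for z
        using that True by (auto simp: one_step_def zeta_def cpi_short)
      then have "(\<Sum>z\<in>one_step A N x. ?h z) = 0" by (intro sum.neutral) blast
      then show ?thesis using True by (simp add: zeta_self)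
    next
      case False
      show ?thesis
      proof (cases "pre x y")
        case nxy: False
        have "?h z = 0" if z: "z \<in> one_step A N x" for z
        proof -
          obtain s where zs: "z = x @ [s]" using z by (auto simp: one_step_def)
          have "\<not> pre z y" using nxy zs by (auto simp: pre_def)
          moreover have "z \<noteq> y" using nxy zs by (auto simp: pre_def)
          ultimately show ?thesis by (simp add: zeta_def cpi_def)
        qed
        then have "(\<Sum>z\<in>one_step A N x. ?h z) = 0" by (intro sum.neutral) blast
        moreover have "zeta p t x y = 0" using False nxy by (simp add: zeta_def cpi_def)
        ultimately show ?thesis using False by simp
      next
        case pxy: True
        then obtain a where a: "y = x @ a" by (auto simp: pre_def)
        then have an: "a \<noteq> []" using False by auto
        let ?w = "x @ [hd a]"
        have lx: "1 \<le> length x" using texts_len[OF x assms(2)] by simp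
        have wt: "?w = take (length x + 1) y" using a an by (cases a) auto
        have wI: "?w \<in> ?I" using wt texts_take[OF y, of "length x + 1"] lx a an by (simp add: Suc_leI)
        have "hd a = y ! length x" using a an by (cases a) auto
        then have "hd a \<in> tokens A" using texts_nth[OF y, of "length x"] lx a an by simp
        then have wo: "?w \<in> one_step A N x" using wI by (auto simp: one_step_def)
        have pw2: "pre ?w y" using a an by (cases a) (auto simp: pre_def)
        have oth: "?h z = 0" if z: "z \<in> one_step A N x" "z \<noteq> ?w" for z
        proof -
          obtain s where zs: "z = x @ [s]" using z by (auto simp: one_step_def)
          have "\<not> pre z y" using a an zs z(2) by (cases a) (auto simp: pre_def)
          moreover have "z \<noteq> y" using a an zs z(2) by (cases a) auto
          ultimately show ?thesis by (simp add: zeta_def cpi_def)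
        qed
        have "(\<Sum>z\<in>one_step A N x. ?h z) = ?h ?w"
        proof -
          have f1: "finite (one_step A N x)" using fin sub by (rule finite_subset[rotated])
          have "(\<Sum>z\<in>one_step A N x - {?w}. ?h z) = 0"
            using oth by (intro sum.neutral) blast
          then show ?thesis using sum.remove[OF f1 wo, of ?h] by simp
        qed
        also have "\<dots> = zeta p t x y"
        proof -
          have "pre x ?w" by (simp add: pre_def)
          then show ?thesis using chain[OF x wI y _ pw2] by (simp add: zeta_def mult.commute)
        qed
        finally show ?thesis using False by simp
      qed
    qed
    finally show ?thesis .
  qed
  show ?thesis unfolding is_inverse_on_def using L R by blast
qed

end
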